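(* Let $p,q\ge1$ be coprime, $n=p+q\ge 2$, and let $\mathsf{T}_c$ be the lower Christoffel word determined by $p,q$, whose suffix array is arithmetically progressed with ratio $k$. Let $\mathbf{M}$ be the $n\times n$ matrix with $\mathbf{M}[i,j]=\mathsf{T}_c[(\mathsf{SA}_{\mathsf{T}_c}[i]+j-1)\bmod n]$. Then for every $i\in[1..n-1]$, rows $i$ and $i+1$ of $\mathbf{M}$ differ in exactly two positions, namely in columns $i(n-k)\bmod n$ and $(i(n-k)+1)\bmod n$.
   Context: Alphabet $\{\mathtt{a}<\mathtt{b}\}$; lexicographic order with a proper prefix smaller than the longer string; suffix array $\mathsf{SA}_{\mathsf{T}}$: permutation of $[1..n]$ such that $\mathsf{T}[\mathsf{SA}_{\mathsf{T}}[i]..n]$ is the $i$-th smallest suffix. $x\bmod n$ denotes the representative of $x$ modulo $n$ in $[1..n]$; $x\operatorname{mod}_0 n$ the representative in $[0..n-1]$. An arithmetically progressed permutation of length $n$ with ratio $k\in[1..n-1]$ is a permutation $P$ of $[1..n]$ with $P[i+1]=P[i]+k\bmod n$. Lower Christoffel word determined by coprime $p,q\ge1$: the string $\mathsf{T}_c$ of length $n=p+q$ with $\mathsf{T}_c[i]=\mathtt{a}$ if $(i-1)q\operatorname{mod}_0 n< iq\operatorname{mod}_0 n$ and $\mathtt{b}$ otherwise, $i\in[1..n]$. *)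

theory Defs
  imports Main
begin

datatype letter = La | Lb

instantiation letter :: linorder
begin
definition less_eq_letter :: "letter \<Rightarrow> letter \<Rightarrow> bool" where
  "less_eq_letter x y \<longleftrightarrow> (x = La \<or> y = Lb)"
definition less_letter :: "letter \<Rightarrow> letter \<Rightarrow> bool" where
  "less_letter x y \<longleftrightarrow> (x = La \<and> y = Lb)"
instance by standard (auto simp: less_eq_letter_def less_letter_def; metis letter.exhaust)+
end

definition nth1 :: "'a list \<Rightarrow> nat \<Rightarrow> 'a" where
  "nth1 xs i = xs ! (i - 1)"

definition mod1 :: "nat \<Rightarrow> nat \<Rightarrow> nat" where
  "mod1 x n = (if x mod n = 0 then n else x mod n)"

definition suffix1 :: "'a list \<Rightarrow> nat \<Rightarrow> 'a list" where
  "suffix1 T i = drop (i - 1) T"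

text \<open>Lexicographic order, a proper prefix being smaller: library lexordp.\<close>
definition is_suffix_array :: "letter list \<Rightarrow> nat list \<Rightarrow> bool" where
  "is_suffix_array T SA \<longleftrightarrow>
     length SA = length T \<and> set SA = {1..length T} \<and>
     (\<forall>i\<in>{1..<length T}. ord_class.lexordp (suffix1 T (nth1 SA i)) (suffix1 T (nth1 SA (i + 1))))"

definition arith_prog_perm :: "nat list \<Rightarrow> nat \<Rightarrow> nat \<Rightarrow> bool" where
  "arith_prog_perm P n k \<longleftrightarrow>
     length P = n \<and> set P = {1..n} \<and> k \<in> {1..n-1} \<and>
     (\<forall>i\<in>{1..<n}. nth1 P (i + 1) = mod1 (nth1 P i + k) n)"

definition christoffel :: "nat \<Rightarrow> nat \<Rightarrow> letter list" where
  "christoffel p q = map (\<lambda>i. if ((i - 1) * q) mod (p + q) < (i * q) mod (p + q) then La else Lb)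
                        [1..<p + q + 1]"

definition conj_matrix :: "letter list \<Rightarrow> nat list \<Rightarrow> nat \<Rightarrow> nat \<Rightarrow> letter" where
  "conj_matrix T SA i j = nth1 T (mod1 (nth1 SA i + j - 1) (length T))"

end

theory Submission
  imports Defs "HOL-Number_Theory.Cong"
begin


lemma lex_nth:
  fixes xs ys :: "'a::linorder list"
  assumes "i < length xs" "i < length ys" "\<forall>j<i. xs!j = ys!j" "xs!i < ys!i"
  shows "ord_class.lexordp xs ys"
proof -
  have t: "take i xs = take i ys" using assms by (intro nth_equalityI) auto
  have "xs = take i xs @ xs!i # drop (Suc i) xs" using assms(1) by (simp add: id_take_nth_drop)
  moreover have "ys = take i xs @ ys!i # drop (Suc i) ys" using assms(2) t by (metis id_take_nth_drop)
  ultimately show ?thesis using assms(4) by (metis lexordp_append_left_rightI)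
qed

lemma lex_prefix:
  fixes xs ys :: "'a::linorder list"
  assumes "length xs < length ys" "\<forall>j<length xs. xs!j = ys!j"
  shows "ord_class.lexordp xs ys"
proof -
  have t: "xs = take (length xs) ys" using assms by (intro nth_equalityI) auto
  have "ys = take (length xs) ys @ drop (length xs) ys" by simp
  moreover have "drop (length xs) ys \<noteq> []" using assms by simp
  ultimately show ?thesis using t by (metis lexordp_append_rightI)
qed

definition code :: "nat \<Rightarrow> nat \<Rightarrow> letter" where "code p z = (if z < p then La else Lb)"

lemma step_mod:
  fixes p q z :: nat
  assumes "z < p + q"
  shows "(z + q) mod (p + q) = (if z < p then z + q else z - p)"
proof (cases "z < p")
  case True then show ?thesis by simp
next
  case False
  then have "z + q = (z - p) + (p + q)" by simp
  moreover have "z - p < p + q" using assms by simp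
  ultimately show ?thesis using False by (metis mod_add_self2 mod_less)
qed

lemma chr_len: "length (christoffel p q) = p + q"
  by (simp add: christoffel_def del: upt_Suc)

lemma chr_nth:
  assumes "p \<ge> 1" "q \<ge> 1" "i < p + q"
  shows "christoffel p q ! i = code p ((i*q) mod (p+q))"
proof -
  let ?r = "(i*q) mod (p+q)"
  have r: "?r < p + q" using assms by simp
  have e: "((i+1)*q) mod (p+q) = (?r + q) mod (p+q)" by (metis add.commute mod_add_right_eq mult_Suc Suc_eq_plus1)
  have "(?r < ((i+1)*q) mod (p+q)) = (?r < p)"
    unfolding e step_mod[OF r] using assms by auto
  then show ?thesis using assms by (simp add: christoffel_def code_def del: upt_Suc)
qed

lemma suf_len: "length (suffix1 (christoffel p q) s) = p + q - (s - 1)"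
  by (simp add: suffix1_def chr_len)

lemma suf_nth:
  assumes "p \<ge> 1" "q \<ge> 1" "1 \<le> s" "s \<le> p + q" "m < p + q - (s - 1)"
  shows "suffix1 (christoffel p q) s ! m = code p ((((s-1)*q) mod (p+q) + m*q) mod (p+q))"
proof -
  have "suffix1 (christoffel p q) s ! m = christoffel p q ! (s - 1 + m)"
    using assms by (simp add: suffix1_def chr_len)
  also have "\<dots> = code p (((s - 1 + m)*q) mod (p+q))" using assms by (intro chr_nth) auto
  also have "((s - 1 + m)*q) mod (p+q) = (((s-1)*q) mod (p+q) + m*q) mod (p+q)"
    by (simp only: add_mult_distrib mod_add_left_eq)
  finally show ?thesis .
qed

lemma inv_step:
  fixes x y p q m :: nat
  assumes "x < y" "y < p + q" "\<forall>j<m. (((x + j*q) mod (p+q)) < p) = (((y + j*q) mod (p+q)) < p)"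
  shows "(y + m*q) mod (p+q) = (x + m*q) mod (p+q) + (y - x)"
  using assms(3)
proof (induction m)
  case 0 then show ?case using assms by simp
next
  case (Suc m)
  let ?X = "(x + m*q) mod (p+q)" and ?Y = "(y + m*q) mod (p+q)"
  have IH: "?Y = ?X + (y - x)" using Suc by auto
  have agree: "(?X < p) = (?Y < p)" using Suc.prems by auto
  have ex: "(x + Suc m*q) mod (p+q) = (?X + q) mod (p+q)" by (simp add: mod_add_left_eq mod_add_right_eq algebra_simps)
  have ey: "(y + Suc m*q) mod (p+q) = (?Y + q) mod (p+q)" by (simp add: mod_add_left_eq mod_add_right_eq algebra_simps)
  have n0: "0 < p + q" using assms(1,2) by linarith
  have X: "?X < p + q" using n0 by simp
  have Y: "?Y < p + q" using n0 by simp
  show ?case unfolding ex ey step_mod[OF X] step_mod[OF Y] using IH agree by auto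
qed

lemma last_val:
  fixes p q :: nat
  assumes "q \<ge> 1"
  shows "((p + q - 1) * q) mod (p + q) = p"
proof -
  obtain r where r: "q = Suc r" using assms by (cases q) auto
  have "(p + q - 1) * q = p + r * (p + q)" unfolding r by (simp add: algebra_simps)
  then have "((p + q - 1) * q) mod (p + q) = (p + r * (p + q)) mod (p + q)" by simp
  also have "\<dots> = p mod (p + q)" by simp
  also have "\<dots> = p" using r by simp
  finally show ?thesis .
qed

lemma key:
  assumes p1: "p \<ge> 1" and q1: "q \<ge> 1" and a: "1 \<le> a" "a \<le> p + q" and b: "1 \<le> b" "b \<le> p + q"
    and lt: "((a-1)*q) mod (p+q) < ((b-1)*q) mod (p+q)"
  shows "ord_class.lexordp (suffix1 (christoffel p q) a) (suffix1 (christoffel p q) b)"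
proof -
  define n where "n = p + q"
  define x where "x = ((a-1)*q) mod n"
  define y where "y = ((b-1)*q) mod n"
  have xy: "x < y" using lt by (simp add: x_def y_def n_def)
  have yn: "y < n" using p1 by (simp add: y_def n_def)
  define P where "P m \<longleftrightarrow> ((x + m*q) mod n < p) \<noteq> ((y + m*q) mod n < p)" for m
  have inv: "(y + m*q) mod n = (x + m*q) mod n + (y - x)" if "\<forall>j<m. \<not> P j" for m
    using inv_step[of x y p q m] xy yn that by (simp add: P_def n_def)
  have Fy: "(y + (n-b)*q) mod n = p"
  proof -
    have "(y + (n-b)*q) mod n = ((b-1)*q + (n-b)*q) mod n" by (simp add: y_def mod_add_left_eq)
    also have "(b-1)*q + (n-b)*q = (n - 1)*q" using b by (simp add: n_def add_mult_distrib[symmetric])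
    finally show ?thesis using last_val[OF q1] by (simp add: n_def)
  qed
  have exP: "\<exists>m\<le>n-b. P m"
  proof (rule ccontr)
    assume "\<not> ?thesis"
    then have "\<forall>j<n-b. \<not> P j" "\<not> P (n-b)" by auto
    with inv[of "n-b"] Fy xy show False by (auto simp: P_def)
  qed
  define m0 where "m0 = (LEAST m. P m)"
  have Pm0: "P m0" unfolding m0_def using exP by (metis LeastI)
  have m0le: "m0 \<le> n - b" unfolding m0_def using exP by (meson Least_le order_trans)
  have before: "\<forall>j<m0. \<not> P j" unfolding m0_def using not_less_Least by blast
  have F0: "(x + m0*q) mod n < p" "\<not> (y + m0*q) mod n < p"
    using inv[OF before] Pm0 xy unfolding P_def by auto
  have sa: "suffix1 (christoffel p q) a ! j = code p ((x + j*q) mod n)" if "j < n - (a-1)" for j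
    using suf_nth[OF p1 q1 a, of j] that by (simp add: x_def n_def)
  have sb: "suffix1 (christoffel p q) b ! j = code p ((y + j*q) mod n)" if "j < n - (b-1)" for j
    using suf_nth[OF p1 q1 b, of j] that by (simp add: y_def n_def)
  have eqj: "code p ((x + j*q) mod n) = code p ((y + j*q) mod n)" if "j < m0" for j
    using before that by (auto simp: P_def code_def)
  show ?thesis
  proof (cases "m0 < n - (a-1)")
    case True
    have mb: "m0 < n - (b-1)" using m0le b by (simp add: n_def)
    show ?thesis
      apply (rule lex_nth[of m0])
      using True mb sa sb eqj F0 b a by (auto simp: suf_len n_def code_def less_letter_def)
  next
    case False
    show ?thesis
      apply (rule lex_prefix)
      using False m0le sa sb eqj b a by (auto simp: suf_len n_def)
  qed
qed



lemma mod1_val: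
  assumes "n > 0" "z \<ge> 1"
  shows "mod1 z n - 1 = (z - 1) mod n" "1 \<le> mod1 z n" "mod1 z n \<le> n"
proof -
  obtain w where w: "z = Suc w" using assms by (cases z) auto
  show "mod1 z n - 1 = (z - 1) mod n" using assms unfolding w mod1_def by (auto simp: mod_Suc)
  show "1 \<le> mod1 z n" using assms unfolding w mod1_def by (auto simp: mod_Suc)
  show "mod1 z n \<le> n" using assms unfolding mod1_def by (auto simp: less_imp_le)
qed

lemma mod1_eq_iff:
  assumes "1 \<le> j" "j \<le> n"
  shows "(mod1 z n = j) \<longleftrightarrow> (int n dvd int z - int j)"
proof -
  have "(mod1 z n = j) \<longleftrightarrow> z mod n = j mod n"
  proof (cases "j = n")
    case True
    have "z mod n < n" using assms by simp
    then show ?thesis using True by (auto simp: mod1_def)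
  next
    case False
    then show ?thesis using assms by (auto simp: mod1_def)
  qed
  also have "\<dots> \<longleftrightarrow> int n dvd int z - int j"
    by (metis mod_eq_dvd_iff of_nat_mod of_nat_eq_iff)
  finally show ?thesis .
qed

lemma dvd_inv:
  fixes n k q a b :: int
  assumes "n dvd k*q - 1"
  shows "n dvd (a + b*q) \<longleftrightarrow> n dvd (a*k + b)"
proof
  assume h: "n dvd a + b*q"
  have "a*k + b = k*(a + b*q) - b*(k*q - 1)" by (simp add: algebra_simps)
  then show "n dvd a*k + b" using h assms by (metis dvd_diff dvd_mult)
next
  assume h: "n dvd a*k + b"
  have "a + b*q = q*(a*k + b) - a*(k*q - 1)" by (simp add: algebra_simps)
  then show "n dvd a + b*q" using h assms by (metis dvd_diff dvd_mult)
qed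

lemma near_top:
  fixes x c n A :: nat
  assumes "x = A mod n" "1 \<le> c" "c \<le> n"
  shows "(x = n - c) \<longleftrightarrow> n dvd (A + c)"
proof -
  have n0: "n > 0" using assms by simp
  have xn: "x < n" using assms n0 by simp
  have "n dvd (A + c) \<longleftrightarrow> n dvd (x + c)" using assms by (simp add: mod_add_left_eq dvd_eq_mod_eq_0)
  also have "\<dots> \<longleftrightarrow> x + c = n"
  proof
    assume "n dvd x + c"
    then obtain t where t: "x + c = n * t" by auto
    have t1: "t \<ge> 1" using t assms by (cases t) auto
    have "x + c < n + n" using xn assms by linarith
    then have "n*t < n*2" using t by (simp add: mult_2_right)
    then have "t < 2" by simp
    then have "t = 1" using t1 by simp
    then show "x + c = n" using t by simp
  qed auto
  finally show ?thesis using assms xn by auto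
qed



lemma dvd_neg_shift:
  fixes n a b :: int
  shows "n dvd (a * n - b) \<longleftrightarrow> n dvd b"
proof
  assume h: "n dvd a * n - b"
  have "n dvd a * n - (a * n - b)" by (rule dvd_diff[OF dvd_triv_right h])
  then show "n dvd b" by simp
next
  assume h: "n dvd b"
  show "n dvd a * n - b" by (rule dvd_diff[OF dvd_triv_right h])
qed

lemma final:
  fixes p q n k i j :: nat
  assumes p1: "p \<ge> 1" and q1: "q \<ge> 1" and n: "n = p + q"
    and kq: "int n dvd int k * int q - 1" and kn: "k \<le> n"
    and i: "1 \<le> i" "i < n" and j: "1 \<le> j" "j \<le> n"
  shows "(code p ((i - 1 + (j - 1)*q) mod n) \<noteq> code p ((i + (j - 1)*q) mod n))
         \<longleftrightarrow> (j = mod1 (i*(n-k)) n \<or> j = mod1 (i*(n-k)+1) n)"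
proof -
  define A where "A = i - 1 + (j - 1)*q"
  define x where "x = A mod n"
  have n0: "n > 0" using n p1 by simp
  have xn: "x < n" using n0 by (simp add: x_def)
  have h1: "(i + (j - 1)*q) mod n = (x + 1) mod n"
  proof -
    have "i + (j - 1)*q = A + 1" using i by (simp add: A_def)
    then show ?thesis by (simp add: x_def mod_Suc_eq)
  qed
  have h2: "(code p x \<noteq> code p ((x + 1) mod n)) \<longleftrightarrow> (x = p - 1 \<or> x = n - 1)"
  proof (cases "x + 1 < n")
    case True
    then show ?thesis using p1 n by (auto simp: code_def)
  next
    case False
    then have "x = n - 1" using xn by simp
    moreover have "(x + 1) mod n = 0" using False xn by (simp add: \<open>x = n - 1\<close> n0)
    ultimately show ?thesis using p1 q1 n by (auto simp: code_def)
  qed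
  have h3: "x = n - 1 \<longleftrightarrow> int n dvd int i * int k + (int j - 1)"
  proof -
    have "x = n - 1 \<longleftrightarrow> n dvd (A + 1)" using near_top[of x A n 1] x_def n0 by simp
    also have "\<dots> \<longleftrightarrow> int n dvd (int i + (int j - 1) * int q)"
    proof -
      have "int (A + 1) = int i + (int j - 1) * int q" using i j by (simp add: A_def of_nat_diff)
      then show ?thesis by (metis of_nat_dvd_iff)
    qed
    also have "\<dots> \<longleftrightarrow> int n dvd int i * int k + (int j - 1)" using dvd_inv[OF kq] by simp
    finally show ?thesis .
  qed
  have h4: "x = p - 1 \<longleftrightarrow> int n dvd int i * int k + int j"
  proof -
    have "p - 1 = n - (q + 1)" using n p1 by simp
    then have "x = p - 1 \<longleftrightarrow> n dvd (A + (q + 1))" using near_top[of x A n "q+1"] x_def n p1 by simp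
    also have "\<dots> \<longleftrightarrow> int n dvd (int i + int j * int q)"
    proof -
      obtain i' j' where ij: "i = Suc i'" "j = Suc j'" using i j by (cases i; cases j) auto
      have "A + (q + 1) = i + j * q" unfolding A_def ij by (simp add: algebra_simps)
      then have "int (A + (q + 1)) = int i + int j * int q" by simp
      then show ?thesis by (metis of_nat_dvd_iff)
    qed
    also have "\<dots> \<longleftrightarrow> int n dvd int i * int k + int j" using dvd_inv[OF kq] by simp
    finally show ?thesis .
  qed
  have cast: "int (i*(n-k)) = int i * int n - int i * int k" using kn by (simp add: of_nat_diff right_diff_distrib)
  have m1: "j = mod1 (i*(n-k)+1) n \<longleftrightarrow> int n dvd int i * int k + (int j - 1)"
  proof -
    have "j = mod1 (i*(n-k)+1) n \<longleftrightarrow> int n dvd int (i*(n-k)+1) - int j" using mod1_eq_iff[OF j] by metis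
    also have "int (i*(n-k)+1) - int j = int i * int n - (int i * int k + (int j - 1))" using cast by simp
    finally show ?thesis using dvd_neg_shift[of "int n" "int i"] by (simp add: mult.commute)
  qed
  have m2: "j = mod1 (i*(n-k)) n \<longleftrightarrow> int n dvd int i * int k + int j"
  proof -
    have "j = mod1 (i*(n-k)) n \<longleftrightarrow> int n dvd int (i*(n-k)) - int j" using mod1_eq_iff[OF j] by metis
    also have "int (i*(n-k)) - int j = int i * int n - (int i * int k + int j)" using cast by simp
    finally show ?thesis using dvd_neg_shift[of "int n" "int i"] by (simp add: mult.commute)
  qed
  show ?thesis unfolding h1 A_def[symmetric] x_def[symmetric] h2 h3 h4 m1 m2 by blast
qed



lemma cop: fixes p q :: nat assumes "coprime p q" shows "coprime q (p + q)"
proof -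
  have "gcd q (p + q) = gcd q (q + p)" by (simp add: add.commute)
  also have "\<dots> = gcd q p" by (rule gcd_add2)
  finally show ?thesis using assms by (simp add: coprime_iff_gcd_eq_1 gcd.commute)
qed

lemma val_inj:
  fixes p q a b :: nat
  assumes "coprime p q" "1 \<le> a" "a \<le> p + q" "1 \<le> b" "b \<le> p + q"
    and "((a-1)*q) mod (p+q) = ((b-1)*q) mod (p+q)"
  shows "a = b"
proof -
  have "[(a-1)*q = (b-1)*q] (mod (p+q))" using assms by (simp add: cong_def)
  then have "[a-1 = b-1] (mod (p+q))" using cong_mult_rcancel_nat[OF cop[OF assms(1)]] by simp
  then have "a - 1 = b - 1" using assms by (intro cong_less_modulus_unique_nat) auto
  then show ?thesis using assms by simp
qed

lemma squeeze:
  fixes f :: "nat \<Rightarrow> nat"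
  assumes inc: "\<And>i. 1 \<le> i \<Longrightarrow> i < n \<Longrightarrow> f i < f (Suc i)"
    and bd: "\<And>i. 1 \<le> i \<Longrightarrow> i \<le> n \<Longrightarrow> f i < n"
    and i: "1 \<le> i" "i \<le> n"
  shows "f i = i - 1"
proof -
  have lo: "i \<le> n \<longrightarrow> i - 1 \<le> f i" if "1 \<le> i" for i
    using that
  proof (induction i rule: dec_induct)
    case base then show ?case by simp
  next
    case (step m) then show ?case using inc[of m] by auto
  qed
  have hi: "d < n \<longrightarrow> f (n - d) + d \<le> n - 1" for d
  proof (induction d)
    case 0 then show ?case using bd[of n] by auto
  next
    case (Suc d)
    show ?case
    proof
      assume "Suc d < n"
      then have "f (n - Suc d) < f (Suc (n - Suc d))" using inc[of "n - Suc d"] by auto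
      moreover have "Suc (n - Suc d) = n - d" using \<open>Suc d < n\<close> by simp
      ultimately show "f (n - Suc d) + Suc d \<le> n - 1" using Suc \<open>Suc d < n\<close> by auto
    qed
  qed
  have "f (n - (n - i)) + (n - i) \<le> n - 1" using hi[of "n - i"] i by auto
  then have "f i \<le> i - 1" using i by simp
  with lo[OF i(1)] i show ?thesis by simp
qed



theorem mainTheorem13:
  fixes p q n k :: nat and SA :: "nat list"
  assumes "p \<ge> 1" and "q \<ge> 1" and "coprime p q"
    and "n = p + q" and "n \<ge> 2"
    and "is_suffix_array (christoffel p q) SA"
    and "arith_prog_perm SA n k"
  shows "\<forall>i\<in>{1..n-1}.
           {j \<in> {1..n}. conj_matrix (christoffel p q) SA i j \<noteq> conj_matrix (christoffel p q) SA (i + 1) j}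
             = {mod1 (i * (n - k)) n, mod1 (i * (n - k) + 1) n}"
proof -
  note p1 = assms(1) and q1 = assms(2) and cp = assms(3) and n = assms(4) and n2 = assms(5)
  define T where "T = christoffel p q"
  have lenT: "length T = n" by (simp add: T_def chr_len n)
  have n0: "n > 0" using n2 by simp
  from assms(7) have lenSA: "length SA = n" and setSA: "set SA = {1..n}" and kr: "k \<in> {1..n-1}"
    and stepSA: "\<forall>i\<in>{1..<n}. nth1 SA (i + 1) = mod1 (nth1 SA i + k) n"
    by (auto simp: arith_prog_perm_def)
  from assms(6) have sorted: "\<forall>i\<in>{1..<n}. ord_class.lexordp (suffix1 T (nth1 SA i)) (suffix1 T (nth1 SA (i + 1)))"
    by (simp add: is_suffix_array_def T_def[symmetric] lenT)
  have SAin: "1 \<le> nth1 SA i \<and> nth1 SA i \<le> n" if "1 \<le> i" "i \<le> n" for i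
  proof -
    have "SA ! (i - 1) \<in> set SA" using that lenSA by simp
    then show ?thesis using setSA by (simp add: nth1_def)
  qed
  define v where "v i = ((nth1 SA i - 1) * q) mod n" for i
  have vlt: "v i < n" for i using n0 by (simp add: v_def)
  have inc: "v i < v (Suc i)" if "1 \<le> i" "i < n" for i
  proof -
    have a: "1 \<le> nth1 SA i" "nth1 SA i \<le> p + q" using SAin[of i] that n by auto
    have b: "1 \<le> nth1 SA (Suc i)" "nth1 SA (Suc i) \<le> p + q" using SAin[of "Suc i"] that n by auto
    have lx: "ord_class.lexordp (suffix1 T (nth1 SA i)) (suffix1 T (nth1 SA (Suc i)))"
      using sorted that by auto
    show ?thesis
    proof (rule ccontr)
      assume "\<not> ?thesis"
      then consider "v (Suc i) < v i" | "v (Suc i) = v i" by linarith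
      then show False
      proof cases
        case 1
        then have "ord_class.lexordp (suffix1 T (nth1 SA (Suc i))) (suffix1 T (nth1 SA i))"
          unfolding T_def using key[OF p1 q1 b a] by (simp add: v_def n)
        then show False using lx lexordp_antisym by blast
      next
        case 2
        then have "nth1 SA (Suc i) = nth1 SA i" using val_inj[OF cp b a] by (simp add: v_def n)
        then show False using lx lexordp_irreflexive' by metis
      qed
    qed
  qed
  have vi: "v i = i - 1" if "1 \<le> i" "i \<le> n" for i
    using squeeze[of n v i] inc vlt that by blast
  have mv: "((mod1 z n - 1) * q) mod n = ((z - 1) * q) mod n" if "z \<ge> 1" for z
    using mod1_val(1)[OF n0 that] by (simp add: mod_mult_left_eq)
  have kq: "int n dvd int k * int q - 1"
  proof -
    have "v 2 = 1" "v 1 = 0" using vi[of 2] vi[of 1] n2 by auto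
    have s1: "1 \<le> nth1 SA 1" using SAin[of 1] n2 by auto
    have "nth1 SA 2 = mod1 (nth1 SA 1 + k) n" using stepSA n2 by (auto simp: one_add_one[symmetric])
    then have "v 2 = ((nth1 SA 1 + k - 1) * q) mod n" using mv[of "nth1 SA 1 + k"] s1 by (simp add: v_def)
    also have "(nth1 SA 1 + k - 1) * q = (nth1 SA 1 - 1) * q + k * q" using s1 by (simp add: algebra_simps)
    finally have "((nth1 SA 1 - 1) * q + k * q) mod n = 1" using \<open>v 2 = 1\<close> by simp
    then have "(v 1 + k * q) mod n = 1" by (simp add: v_def mod_add_left_eq)
    then have "(k * q) mod n = 1" using \<open>v 1 = 0\<close> by simp
    then have "k * q = n * (k * q div n) + 1" by (metis mod_mult_div_eq add.commute)
    then have "int (k * q) = int n * int (k * q div n) + 1" by (metis of_nat_add of_nat_mult of_nat_1)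
    then have "int k * int q - 1 = int n * int (k * q div n)" by simp
    then show ?thesis by simp
  qed
  have conj: "conj_matrix T SA i j = code p ((v i + (j - 1) * q) mod n)" if "1 \<le> i" "i \<le> n" "1 \<le> j" "j \<le> n" for i j
  proof -
    define s where "s = nth1 SA i"
    have s: "1 \<le> s" "s \<le> n" using SAin[OF that(1,2)] by (auto simp: s_def)
    have z: "1 \<le> s + j - 1" using s that by simp
    have "conj_matrix T SA i j = T ! (mod1 (s + j - 1) n - 1)" by (simp add: conj_matrix_def nth1_def lenT s_def)
    also have "\<dots> = code p (((mod1 (s + j - 1) n - 1) * q) mod n)"
      unfolding T_def n using chr_nth[OF p1 q1] mod1_val(1)[OF n0 z] n0 n by simp
    also have "((mod1 (s + j - 1) n - 1) * q) mod n = ((s + j - 1 - 1) * q) mod n" using mv[OF z] .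
    also have "(s + j - 1 - 1) * q = (s - 1) * q + (j - 1) * q" using s that by (simp add: algebra_simps)
    finally show ?thesis by (simp add: v_def s_def mod_add_left_eq)
  qed
  show ?thesis
  proof
    fix i assume iin: "i \<in> {1..n-1}"
    then have i: "1 \<le> i" "i < n" using n2 by auto
    have kn: "k \<le> n" using kr by auto
    have "j \<in> {j \<in> {1..n}. conj_matrix T SA i j \<noteq> conj_matrix T SA (i + 1) j} \<longleftrightarrow>
          j \<in> {mod1 (i * (n - k)) n, mod1 (i * (n - k) + 1) n}" for j
    proof (cases "1 \<le> j \<and> j \<le> n")
      case True
      have "conj_matrix T SA i j = code p ((i - 1 + (j - 1) * q) mod n)"
        using conj[of i j] vi[of i] i True by simp
      moreover have "conj_matrix T SA (i+1) j = code p ((i + (j - 1) * q) mod n)"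
        using conj[of "i+1" j] vi[of "i+1"] i True by simp
      ultimately show ?thesis using final[OF p1 q1 n kq kn i, of j] True by auto
    next
      case False
      have "1 \<le> mod1 z n \<and> mod1 z n \<le> n" for z
        using n0 by (auto simp: mod1_def intro: Suc_leI)
      then show ?thesis using False by auto
    qed
    then show "{j \<in> {1..n}. conj_matrix (christoffel p q) SA i j \<noteq> conj_matrix (christoffel p q) SA (i + 1) j}
             = {mod1 (i * (n - k)) n, mod1 (i * (n - k) + 1) n}" unfolding T_def by blast
  qed
qed

end
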